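(* Let $n\geq 2$ and let $G_n$ be the graph whose vertices are the permutations of $[n]$, with $\sigma$ and $\tau$ adjacent iff there is no $k\in[n-1]$ with $\sigma^{-1}([k])=\tau^{-1}([k])$. Then $\chi(G_n)=n$ and the independence number of $G_n$ is $(n-1)!$. Moreover, if $\rho$ is the cyclic permutation $\rho(i)\equiv i+1 \pmod n$ and $H=\langle\rho\rangle$, then each right coset $H\sigma$ is a clique of size $n$ in $G_n$, so the vertex set of $G_n$ is partitioned into $(n-1)!$ cliques of size $n$.
   Context: $G_n$ is the Kneser graph of the permutohedron $\mathrm{Perm}_{n-1}$ (the convex hull of the permutations of $[n]$ as points of $\mathbb{R}^n$): its vertices are permutations, and two vertices are adjacent iff no facet of the permutohedron contains both; the facets correspond to nonempty proper subsets $S\subsetneq[n]$, the facet for $S$ containing exactly the permutations $\sigma$ with $\sigma(S)=[|S|]$. The claim is stated directly in terms of the combinatorial adjacency rule given. *)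

theory Defs
  imports Main "HOL-Combinatorics.Permutations"
begin

definition proper_colouring :: "'a set \<Rightarrow> ('a \<Rightarrow> 'a \<Rightarrow> bool) \<Rightarrow> nat \<Rightarrow> ('a \<Rightarrow> nat) \<Rightarrow> bool" where
  "proper_colouring V E k c \<longleftrightarrow>
     (\<forall>v\<in>V. c v < k) \<and> (\<forall>u\<in>V. \<forall>v\<in>V. E u v \<longrightarrow> c u \<noteq> c v)"

definition chromatic_number :: "'a set \<Rightarrow> ('a \<Rightarrow> 'a \<Rightarrow> bool) \<Rightarrow> nat" where
  "chromatic_number V E = (LEAST k. \<exists>c. proper_colouring V E k c)"

definition independent_set :: "'a set \<Rightarrow> ('a \<Rightarrow> 'a \<Rightarrow> bool) \<Rightarrow> 'a set \<Rightarrow> bool" where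
  "independent_set V E S \<longleftrightarrow> S \<subseteq> V \<and> (\<forall>u\<in>S. \<forall>v\<in>S. \<not> E u v)"

definition independence_number :: "'a set \<Rightarrow> ('a \<Rightarrow> 'a \<Rightarrow> bool) \<Rightarrow> nat" where
  "independence_number V E = Max (card ` {S. independent_set V E S})"

definition clique :: "'a set \<Rightarrow> ('a \<Rightarrow> 'a \<Rightarrow> bool) \<Rightarrow> 'a set \<Rightarrow> bool" where
  "clique V E S \<longleftrightarrow> S \<subseteq> V \<and> (\<forall>u\<in>S. \<forall>v\<in>S. u \<noteq> v \<longrightarrow> E u v)"

definition perm_vertices :: "nat \<Rightarrow> (nat \<Rightarrow> nat) set" where
  "perm_vertices n = {\<sigma>. \<sigma> permutes {1..n}}"

definition preim :: "nat \<Rightarrow> (nat \<Rightarrow> nat) \<Rightarrow> nat \<Rightarrow> nat set" where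
  "preim n \<sigma> k = {i \<in> {1..n}. \<sigma> i \<in> {1..k}}"

definition G_adj :: "nat \<Rightarrow> (nat \<Rightarrow> nat) \<Rightarrow> (nat \<Rightarrow> nat) \<Rightarrow> bool" where
  "G_adj n \<sigma> \<tau> \<longleftrightarrow> \<not> (\<exists>k\<in>{1..n-1}. preim n \<sigma> k = preim n \<tau> k)"

definition rho :: "nat \<Rightarrow> nat \<Rightarrow> nat" where
  "rho n i = (if i \<in> {1..n} then i mod n + 1 else i)"

text \<open>Right coset H\<sigma> of H = \<langle>\<rho>\<rangle>, products composed as functions
((\<rho>\<sigma>)(i) = \<rho>(\<sigma>(i))).\<close>
definition right_coset :: "nat \<Rightarrow> (nat \<Rightarrow> nat) \<Rightarrow> (nat \<Rightarrow> nat) set" where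
  "right_coset n \<sigma> = {(rho n ^^ j) \<circ> \<sigma> | j. j < n}"

end

theory Submission
  imports Defs
begin

lemma rho_pow_in:
  assumes "n \<ge> 1" "i \<in> {1..n}"
  shows "(rho n ^^ j) i = (i - 1 + j) mod n + 1"
proof (induction j)
  case 0
  then show ?case using assms by auto
next
  case (Suc j)
  have "(rho n ^^ Suc j) i = rho n ((i - 1 + j) mod n + 1)" using Suc by simp
  also have "\<dots> = Suc ((i - 1 + j) mod n) mod n + 1"
  proof -
    have "(i - 1 + j) mod n < n" using assms by simp
    then show ?thesis by (simp add: rho_def)
  qed
  also have "\<dots> = (i - 1 + Suc j) mod n + 1" by (simp add: mod_Suc_eq)
  finally show ?case .
qed

lemma rho_pow_out:
  assumes "i \<notin> {1..n}"
  shows "(rho n ^^ j) i = i"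
  by (induction j) (use assms in \<open>auto simp: rho_def\<close>)

lemma rho_pow_mod:
  assumes "n \<ge> 1"
  shows "rho n ^^ j = rho n ^^ (j mod n)"
proof
  fix i
  show "(rho n ^^ j) i = (rho n ^^ (j mod n)) i"
  proof (cases "i \<in> {1..n}")
    case True
    have "(i - 1 + j) mod n = (i - 1 + j mod n) mod n" by (rule mod_add_right_eq[symmetric])
    then show ?thesis by (simp only: rho_pow_in[OF assms True])
  next
    case False
    then show ?thesis by (simp add: rho_pow_out)
  qed
qed

lemma rho_permutes:
  assumes "n \<ge> 1"
  shows "rho n permutes {1..n}"
proof (rule bij_imp_permutes)
  have inj: "inj_on (rho n) {1..n}"
  proof (rule inj_onI)
    fix a b assume ab: "a \<in> {1..n}" "b \<in> {1..n}" "rho n a = rho n b"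
    then have "a mod n = b mod n" by (simp add: rho_def)
    with ab show "a = b"
      by (metis atLeastAtMost_iff le_neq_implies_less mod_less mod_self neq0_conv not_one_le_zero)
  qed
  have sub: "rho n ` {1..n} \<subseteq> {1..n}"
    using assms by (auto simp: rho_def Suc_le_eq)
  have "rho n ` {1..n} = {1..n}"
    using endo_inj_surj[OF _ sub inj] by simp
  then show "bij_betw (rho n) {1..n} {1..n}" using inj by (simp add: bij_betw_def)
  show "\<And>x. x \<notin> {1..n} \<Longrightarrow> rho n x = x" by (auto simp: rho_def)
qed

lemma rho_pow_permutes:
  assumes "n \<ge> 1"
  shows "(rho n ^^ j) permutes {1..n}"
proof (induction j)
  case 0
  then show ?case by (simp add: id_def[symmetric])
next
  case (Suc j)
  then show ?case
    using permutes_compose[OF Suc rho_permutes[OF assms]] by (simp only: funpow.simps(2))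
qed

lemma coset_perm:
  assumes "n \<ge> 1" "\<sigma> permutes {1..n}" "\<tau> \<in> right_coset n \<sigma>"
  shows "\<tau> permutes {1..n}"
  using assms permutes_compose[OF assms(2) rho_pow_permutes[OF assms(1)]]
  by (auto simp: right_coset_def)

lemma coset_mem:
  assumes "n \<ge> 1"
  shows "\<tau> \<in> right_coset n \<sigma> \<longleftrightarrow> (\<exists>j. \<tau> = (rho n ^^ j) \<circ> \<sigma>)"
proof
  assume "\<exists>j. \<tau> = (rho n ^^ j) \<circ> \<sigma>"
  then obtain j where "\<tau> = (rho n ^^ j) \<circ> \<sigma>" by blast
  then have "\<tau> = (rho n ^^ (j mod n)) \<circ> \<sigma>" by (simp only: rho_pow_mod[OF assms, of j])
  moreover have "j mod n < n" using assms by simp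
  ultimately show "\<tau> \<in> right_coset n \<sigma>" unfolding right_coset_def by blast
qed (auto simp: right_coset_def)

lemma self_in_coset:
  assumes "n \<ge> 1"
  shows "\<sigma> \<in> right_coset n \<sigma>"
proof -
  have "\<sigma> = (rho n ^^ 0) \<circ> \<sigma>" by simp
  moreover have "(0::nat) < n" using assms by simp
  ultimately have "\<exists>j. \<sigma> = (rho n ^^ j) \<circ> \<sigma> \<and> j < n" by blast
  then show ?thesis unfolding right_coset_def by simp
qed

lemma coset_eq:
  assumes "n \<ge> 1" "\<tau> \<in> right_coset n \<sigma>"
  shows "right_coset n \<tau> = right_coset n \<sigma>"
proof -
  obtain j where j: "\<tau> = (rho n ^^ j) \<circ> \<sigma>" using assms coset_mem by blast
  show ?thesis
  proof
    show "right_coset n \<tau> \<subseteq> right_coset n \<sigma>"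
    proof
      fix x assume "x \<in> right_coset n \<tau>"
      then obtain a where "x = (rho n ^^ a) \<circ> \<tau>" using coset_mem[OF assms(1)] by blast
      then have "x = (rho n ^^ (a + j)) \<circ> \<sigma>" using j by (simp add: funpow_add o_assoc)
      then show "x \<in> right_coset n \<sigma>" using coset_mem[OF assms(1)] by blast
    qed
  next
    show "right_coset n \<sigma> \<subseteq> right_coset n \<tau>"
    proof
      fix x assume "x \<in> right_coset n \<sigma>"
      then obtain a where x: "x = (rho n ^^ a) \<circ> \<sigma>" using coset_mem[OF assms(1)] by blast
      have nj: "n * j \<ge> j" using assms(1) by simp
      have "(rho n ^^ (a + n * j - j)) \<circ> \<tau> = (rho n ^^ (a + n * j)) \<circ> \<sigma>"
      proof -
        have "(rho n ^^ (a + n * j - j)) \<circ> \<tau> = (rho n ^^ (a + n * j - j) \<circ> rho n ^^ j) \<circ> \<sigma>"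
          using j by (simp add: o_assoc)
        also have "rho n ^^ (a + n * j - j) \<circ> rho n ^^ j = rho n ^^ (a + n * j - j + j)"
          by (simp only: funpow_add)
        also have "a + n * j - j + j = a + n * j" using nj by linarith
        finally show ?thesis .
      qed
      also have "rho n ^^ (a + n * j) = rho n ^^ a"
      proof -
        have e1: "rho n ^^ (a + n * j) = rho n ^^ ((a + n * j) mod n)" by (rule rho_pow_mod[OF assms(1)])
        have e2: "(a + n * j) mod n = a mod n" by simp
        have e3: "rho n ^^ (a mod n) = rho n ^^ a" by (rule rho_pow_mod[OF assms(1), symmetric])
        show ?thesis by (simp only: e1 e2 e3)
      qed
      finally have calc: "(rho n ^^ (a + n * j - j)) \<circ> \<tau> = rho n ^^ a \<circ> \<sigma>" .
      have "x = (rho n ^^ (a + n * j - j)) \<circ> \<tau>" by (rule trans[OF x sym[OF calc]])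
      then show "x \<in> right_coset n \<tau>" using coset_mem[OF assms(1)] by blast
    qed
  qed
qed

lemma key_preim:
  assumes n: "n \<ge> 2" and s: "\<sigma> permutes {1..n}" and j: "j1 < j2" "j2 < n"
    and k: "k \<in> {1..n-1}"
  shows "preim n ((rho n ^^ j1) \<circ> \<sigma>) k \<noteq> preim n ((rho n ^^ j2) \<circ> \<sigma>) k"
proof
  assume eq: "preim n ((rho n ^^ j1) \<circ> \<sigma>) k = preim n ((rho n ^^ j2) \<circ> \<sigma>) k"
  define d where "d = j2 - j1"
  define y where "y = k - d"
  define x where "x = (y + n - j1) mod n"
  define m where "m = x + 1"
  have n1: "n \<ge> 1" using n by simp
  have yk: "y < k" using k j unfolding y_def d_def by auto
  have yd: "y + d \<ge> k" "y + d < n" using k j by (auto simp: y_def d_def)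
  have m: "m \<in> {1..n}" using n by (simp add: m_def x_def Suc_le_eq)
  have c1: "(m - 1 + j1) mod n = y"
  proof -
    have "(m - 1 + j1) mod n = ((y + n - j1) mod n + j1) mod n" by (simp add: m_def x_def)
    also have "\<dots> = (y + n - j1 + j1) mod n" by (simp add: mod_add_left_eq)
    also have "\<dots> = (y + n) mod n" using j by simp
    also have "\<dots> = y" using yk k by simp
    finally show ?thesis .
  qed
  have c2: "(m - 1 + j2) mod n = y + d"
  proof -
    have "(m - 1 + j2) mod n = ((y + n - j1) mod n + j2) mod n" by (simp add: m_def x_def)
    also have "\<dots> = (y + n - j1 + j2) mod n" by (simp add: mod_add_left_eq)
    also have "\<dots> = (y + d + n) mod n"
    proof -
      have "y + n - j1 + j2 = y + d + n" using j unfolding d_def by arith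
      then show ?thesis by (simp only:)
    qed
    also have "\<dots> = y + d" using yd by simp
    finally show ?thesis .
  qed
  obtain i where i: "i \<in> {1..n}" "\<sigma> i = m"
    using m permutes_image[OF s] by (metis imageE)
  have "i \<in> preim n ((rho n ^^ j1) \<circ> \<sigma>) k"
    using i c1 yk rho_pow_in[OF n1 m, of j1] by (simp add: preim_def)
  moreover have "i \<notin> preim n ((rho n ^^ j2) \<circ> \<sigma>) k"
    using i c2 yd rho_pow_in[OF n1 m, of j2] by (simp add: preim_def)
  ultimately show False using eq by simp
qed

lemma adj_coset:
  assumes n: "n \<ge> 2" and s: "\<sigma> permutes {1..n}" and j: "j1 \<noteq> j2" "j1 < n" "j2 < n"
  shows "G_adj n ((rho n ^^ j1) \<circ> \<sigma>) ((rho n ^^ j2) \<circ> \<sigma>)"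
proof (cases "j1 < j2")
  case True
  then show ?thesis using key_preim[OF n s True j(3)] by (auto simp: G_adj_def)
next
  case False
  then have "j2 < j1" using j by simp
  then show ?thesis using key_preim[OF n s _ j(2)] by (metis G_adj_def)
qed

lemma not_adj_self:
  assumes "n \<ge> 2"
  shows "\<not> G_adj n \<sigma> \<sigma>"
  using assms by (auto simp: G_adj_def)


lemma coset_image:
  "right_coset n \<sigma> = (\<lambda>j. (rho n ^^ j) \<circ> \<sigma>) ` {..<n}"
  unfolding right_coset_def by auto

lemma coset_clique:
  assumes n: "n \<ge> 2" and s: "\<sigma> \<in> perm_vertices n"
  shows "clique (perm_vertices n) (G_adj n) (right_coset n \<sigma>)"
proof -
  have n1: "n \<ge> 1" using n by simp
  have sp: "\<sigma> permutes {1..n}" using s by (simp add: perm_vertices_def)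
  have "right_coset n \<sigma> \<subseteq> perm_vertices n"
    using coset_perm[OF n1 sp] by (auto simp: perm_vertices_def)
  moreover have "G_adj n u v" if uv: "u \<in> right_coset n \<sigma>" "v \<in> right_coset n \<sigma>" "u \<noteq> v" for u v
  proof -
    obtain a b where ab: "u = (rho n ^^ a) \<circ> \<sigma>" "a < n" "v = (rho n ^^ b) \<circ> \<sigma>" "b < n"
      using uv(1,2) unfolding right_coset_def by blast
    then have "a \<noteq> b" using uv(3) by auto
    then show ?thesis using adj_coset[OF n sp _ ab(2) ab(4)] ab by simp
  qed
  ultimately show ?thesis unfolding clique_def by blast
qed

lemma coset_card:
  assumes n: "n \<ge> 2" and s: "\<sigma> \<in> perm_vertices n"
  shows "card (right_coset n \<sigma>) = n"
proof -
  have sp: "\<sigma> permutes {1..n}" using s by (simp add: perm_vertices_def)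
  have "inj_on (\<lambda>j. (rho n ^^ j) \<circ> \<sigma>) {..<n}"
  proof (rule inj_onI)
    fix a b assume ab: "a \<in> {..<n}" "b \<in> {..<n}" "(rho n ^^ a) \<circ> \<sigma> = (rho n ^^ b) \<circ> \<sigma>"
    show "a = b"
    proof (rule ccontr)
      assume "a \<noteq> b"
      then have "G_adj n ((rho n ^^ a) \<circ> \<sigma>) ((rho n ^^ b) \<circ> \<sigma>)"
        using adj_coset[OF n sp] ab(1,2) by auto
      then have "G_adj n ((rho n ^^ b) \<circ> \<sigma>) ((rho n ^^ b) \<circ> \<sigma>)"
        using ab(3) by simp
      then show False using not_adj_self[OF n] by blast
    qed
  qed
  then show ?thesis by (simp add: coset_image card_image)
qed

lemma cosets_union:
  assumes n: "n \<ge> 2"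
  shows "\<Union> (right_coset n ` perm_vertices n) = perm_vertices n"
proof -
  have n1: "n \<ge> 1" using n by simp
  show ?thesis
  proof
    show "\<Union> (right_coset n ` perm_vertices n) \<subseteq> perm_vertices n"
      using coset_perm[OF n1] by (auto simp: perm_vertices_def)
    show "perm_vertices n \<subseteq> \<Union> (right_coset n ` perm_vertices n)"
      using self_in_coset[OF n1] by blast
  qed
qed

lemma cosets_disjoint:
  assumes n: "n \<ge> 2"
  shows "\<forall>C1\<in>right_coset n ` perm_vertices n. \<forall>C2\<in>right_coset n ` perm_vertices n.
            C1 \<noteq> C2 \<longrightarrow> C1 \<inter> C2 = {}"
proof (intro ballI impI)
  fix C1 C2 assume C: "C1 \<in> right_coset n ` perm_vertices n" "C2 \<in> right_coset n ` perm_vertices n"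
    "C1 \<noteq> C2"
  have n1: "n \<ge> 1" using n by simp
  show "C1 \<inter> C2 = {}"
  proof (rule ccontr)
    assume "C1 \<inter> C2 \<noteq> {}"
    then obtain x where "x \<in> C1" "x \<in> C2" by blast
    moreover obtain s t where "C1 = right_coset n s" "C2 = right_coset n t" using C by blast
    ultimately have "right_coset n x = C1" "right_coset n x = C2"
      using coset_eq[OF n1, of x s] coset_eq[OF n1, of x t] by simp_all
    then show False using C(3) by simp
  qed
qed

lemma card_V:
  "card (perm_vertices n) = fact n" "finite (perm_vertices n)"
  unfolding perm_vertices_def
  by (rule card_permutations, simp, simp) (rule finite_permutations, simp)

lemma cosets_card:
  assumes n: "n \<ge> 2"
  shows "card (right_coset n ` perm_vertices n) = fact (n - 1)"
proof -
  let ?C = "right_coset n ` perm_vertices n"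
  have finC: "finite ?C" using card_V(2) by simp
  have fin: "\<And>A. A \<in> ?C \<Longrightarrow> finite A"
    using cosets_union[OF n] card_V(2) by (metis Union_upper finite_subset)
  have pw: "pairwise disjnt ?C"
    using cosets_disjoint[OF n] unfolding pairwise_def disjnt_def by blast
  have "fact n = card (\<Union> ?C)" using cosets_union[OF n] card_V(1) by simp
  also have "\<dots> = sum card ?C" by (rule card_Union_disjoint[OF pw fin])
  also have "\<dots> = sum (\<lambda>_. n) ?C" using coset_card[OF n] by (intro sum.cong) auto
  also have "\<dots> = n * card ?C" by simp
  finally have eq: "fact n = n * card ?C" .
  obtain m where m: "n = Suc m" using n by (cases n) auto
  have h: "(fact n :: nat) = n * fact (n - 1)" using m by simp
  have "n * card ?C = n * fact (n - 1)" by (simp only: eq[symmetric] h)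
  moreover have "n \<noteq> 0" using n by simp
  ultimately show ?thesis using mult_left_cancel[of n "card ?C" "fact (n - 1)"] by simp
qed


lemma indep_le:
  assumes n: "n \<ge> 2" and S: "independent_set (perm_vertices n) (G_adj n) S"
  shows "card S \<le> fact (n - 1)"
proof -
  have n1: "n \<ge> 1" using n by simp
  have SV: "S \<subseteq> perm_vertices n" and ni: "\<And>u v. u \<in> S \<Longrightarrow> v \<in> S \<Longrightarrow> \<not> G_adj n u v"
    using S unfolding independent_set_def by auto
  have "inj_on (right_coset n) S"
  proof (rule inj_onI)
    fix x y assume xy: "x \<in> S" "y \<in> S" "right_coset n x = right_coset n y"
    show "x = y"
    proof (rule ccontr)
      assume "x \<noteq> y"
      have xx: "x \<in> right_coset n x" using self_in_coset[OF n1, of x] .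
      have yx: "y \<in> right_coset n x" using self_in_coset[OF n1, of y] xy(3) by simp
      have xV: "x \<in> perm_vertices n" using xy(1) SV by (rule subsetD[rotated])
      have "\<forall>u\<in>right_coset n x. \<forall>v\<in>right_coset n x. u \<noteq> v \<longrightarrow> G_adj n u v"
        using coset_clique[OF n xV] unfolding clique_def by (rule conjunct2)
      then have "G_adj n x y" using xx yx \<open>x \<noteq> y\<close> by blast
      then show False using ni[OF xy(1) xy(2)] by simp
    qed
  qed
  moreover have "right_coset n ` S \<subseteq> right_coset n ` perm_vertices n" using SV by blast
  moreover have "finite (right_coset n ` perm_vertices n)" using card_V(2) by simp
  ultimately have "card S \<le> card (right_coset n ` perm_vertices n)" by (rule card_inj_on_le)
  then show ?thesis using cosets_card[OF n] by simp
qed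

lemma indep_exists:
  assumes n: "n \<ge> 2"
  shows "independent_set (perm_vertices n) (G_adj n) {\<sigma>. \<sigma> permutes {2..n}}"
    and "card {\<sigma>. \<sigma> permutes {2..n}} = fact (n - 1)"
proof -
  have sub: "{2..n} \<subseteq> {1..n}" by auto
  have pre: "preim n \<sigma> 1 = {1}" if "\<sigma> permutes {2..n}" for \<sigma>
  proof -
    have sp: "\<sigma> permutes {1..n}" using permutes_subset[OF that sub] .
    have s1: "\<sigma> 1 = 1" using permutes_not_in[OF that] by simp
    have iff: "\<sigma> i = 1 \<longleftrightarrow> i = 1" for i
    proof
      assume "\<sigma> i = 1"
      then have "\<sigma> i = \<sigma> 1" using s1 by simp
      then show "i = 1" by (rule injD[OF permutes_inj[OF sp]])
    qed (use s1 in simp)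
    show ?thesis
    proof (rule set_eqI)
      fix i
      have "i \<in> preim n \<sigma> 1 \<longleftrightarrow> i \<in> {1..n} \<and> \<sigma> i = 1" by (simp add: preim_def)
      also have "\<dots> \<longleftrightarrow> i = 1" using iff[of i] n by auto
      finally show "i \<in> preim n \<sigma> 1 \<longleftrightarrow> i \<in> {1}" by simp
    qed
  qed
  show "independent_set (perm_vertices n) (G_adj n) {\<sigma>. \<sigma> permutes {2..n}}"
    unfolding independent_set_def
  proof (intro conjI ballI)
    show "{\<sigma>. \<sigma> permutes {2..n}} \<subseteq> perm_vertices n"
    proof
      fix x assume "x \<in> {\<sigma>. \<sigma> permutes {2..n}}"
      then have "x permutes {2..n}" by simp
      then have "x permutes {1..n}" using sub by (rule permutes_subset)
      then show "x \<in> perm_vertices n" by (simp add: perm_vertices_def)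
    qed
    fix u v assume "u \<in> {\<sigma>. \<sigma> permutes {2..n}}" "v \<in> {\<sigma>. \<sigma> permutes {2..n}}"
    then have "preim n u 1 = preim n v 1" using pre by simp
    moreover have "(1::nat) \<in> {1..n-1}" using n by simp
    ultimately show "\<not> G_adj n u v" unfolding G_adj_def by blast
  qed
  have "card {2..n} = n - 1" by simp
  then show "card {\<sigma>. \<sigma> permutes {2..n}} = fact (n - 1)"
    by (rule card_permutations) simp
qed

lemma independence:
  assumes n: "n \<ge> 2"
  shows "independence_number (perm_vertices n) (G_adj n) = fact (n - 1)"
  unfolding independence_number_def
proof (rule Max_eqI)
  have "{S. independent_set (perm_vertices n) (G_adj n) S} \<subseteq> Pow (perm_vertices n)"
    unfolding independent_set_def by auto
  then have "finite {S. independent_set (perm_vertices n) (G_adj n) S}"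
    by (rule finite_subset) (simp add: card_V(2))
  then show "finite (card ` {S. independent_set (perm_vertices n) (G_adj n) S})" by simp
  show "\<And>y. y \<in> card ` {S. independent_set (perm_vertices n) (G_adj n) S} \<Longrightarrow> y \<le> fact (n - 1)"
  proof -
    fix y assume "y \<in> card ` {S. independent_set (perm_vertices n) (G_adj n) S}"
    then obtain S where S: "y = card S" "independent_set (perm_vertices n) (G_adj n) S" by blast
    show "y \<le> fact (n - 1)" unfolding S(1) by (rule indep_le[OF n S(2)])
  qed
  show "fact (n - 1) \<in> card ` {S. independent_set (perm_vertices n) (G_adj n) S}"
  proof (rule image_eqI)
    show "fact (n - 1) = card {\<sigma>. \<sigma> permutes {2..n}}" using indep_exists(2)[OF n] by simp
    show "{\<sigma>. \<sigma> permutes {2..n}} \<in> {S. independent_set (perm_vertices n) (G_adj n) S}"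
      using indep_exists(1)[OF n] by simp
  qed
qed

lemma colour_ok:
  assumes n: "n \<ge> 2"
  shows "proper_colouring (perm_vertices n) (G_adj n) n (\<lambda>\<sigma>. inv \<sigma> 1 - 1)"
proof -
  have inr: "inv \<sigma> 1 \<in> {1..n}" if "\<sigma> \<in> perm_vertices n" for \<sigma>
  proof -
    have "inv \<sigma> permutes {1..n}" using that permutes_inv by (auto simp: perm_vertices_def)
    then show ?thesis using permutes_in_image[of "inv \<sigma>" "{1..n}" 1] n by simp
  qed
  have pre: "preim n \<sigma> 1 = {inv \<sigma> 1}" if "\<sigma> \<in> perm_vertices n" for \<sigma>
  proof -
    have sp: "\<sigma> permutes {1..n}" using that by (simp add: perm_vertices_def)
    have iff: "\<sigma> i = 1 \<longleftrightarrow> i = inv \<sigma> 1" for i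
    proof
      assume "\<sigma> i = 1"
      then show "i = inv \<sigma> 1" using permutes_inverses(2)[OF sp, of i] by simp
    next
      assume "i = inv \<sigma> 1"
      then show "\<sigma> i = 1" using permutes_inverses(1)[OF sp, of 1] by simp
    qed
    show ?thesis
    proof (rule set_eqI)
      fix i
      have "i \<in> preim n \<sigma> 1 \<longleftrightarrow> i \<in> {1..n} \<and> \<sigma> i = 1" by (simp add: preim_def)
      also have "\<dots> \<longleftrightarrow> i = inv \<sigma> 1" using iff[of i] inr[OF that] by auto
      finally show "i \<in> preim n \<sigma> 1 \<longleftrightarrow> i \<in> {inv \<sigma> 1}" by simp
    qed
  qed
  show ?thesis unfolding proper_colouring_def
  proof (intro conjI ballI impI)
    fix v assume "v \<in> perm_vertices n"
    then show "inv v 1 - 1 < n" using inr by fastforce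
  next
    fix u v assume uv: "u \<in> perm_vertices n" "v \<in> perm_vertices n" "G_adj n u v"
    show "inv u 1 - 1 \<noteq> inv v 1 - 1"
    proof
      assume "inv u 1 - 1 = inv v 1 - 1"
      then have "inv u 1 = inv v 1" using inr[OF uv(1)] inr[OF uv(2)] by auto
      then have "preim n u 1 = preim n v 1" using pre uv by simp
      moreover have "(1::nat) \<in> {1..n-1}" using n by simp
      ultimately show False using uv(3) unfolding G_adj_def by blast
    qed
  qed
qed

lemma colour_lb:
  assumes n: "n \<ge> 2" and c: "proper_colouring (perm_vertices n) (G_adj n) k c"
  shows "n \<le> k"
proof -
  have idV: "id \<in> perm_vertices n" by (simp add: perm_vertices_def)
  let ?C = "right_coset n id"
  have cl: "clique (perm_vertices n) (G_adj n) ?C" by (rule coset_clique[OF n idV])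
  have "inj_on c ?C"
  proof (rule inj_onI)
    fix x y assume xy: "x \<in> ?C" "y \<in> ?C" "c x = c y"
    show "x = y"
    proof (rule ccontr)
      assume "x \<noteq> y"
      then have "G_adj n x y" "x \<in> perm_vertices n" "y \<in> perm_vertices n"
        using cl xy unfolding clique_def by auto
      then show False using c xy(3) unfolding proper_colouring_def by blast
    qed
  qed
  moreover have "c ` ?C \<subseteq> {..<k}"
    using c cl unfolding proper_colouring_def clique_def by auto
  ultimately have "card ?C \<le> card {..<k}" using card_inj_on_le by blast
  then show ?thesis using coset_card[OF n idV] by simp
qed

lemma chromatic:
  assumes n: "n \<ge> 2"
  shows "chromatic_number (perm_vertices n) (G_adj n) = n"
  unfolding chromatic_number_def
  by (rule Least_equality) (use colour_ok[OF n] colour_lb[OF n] in blast)+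

theorem mainTheorem17:
  fixes n :: nat
  assumes "n \<ge> 2"
  shows "chromatic_number (perm_vertices n) (G_adj n) = n \<and>
         independence_number (perm_vertices n) (G_adj n) = fact (n - 1) \<and>
         (\<forall>\<sigma>\<in>perm_vertices n.
            clique (perm_vertices n) (G_adj n) (right_coset n \<sigma>) \<and>
            card (right_coset n \<sigma>) = n) \<and>
         \<Union> (right_coset n ` perm_vertices n) = perm_vertices n \<and>
         (\<forall>C1\<in>right_coset n ` perm_vertices n. \<forall>C2\<in>right_coset n ` perm_vertices n.
            C1 \<noteq> C2 \<longrightarrow> C1 \<inter> C2 = {}) \<and>
         card (right_coset n ` perm_vertices n) = fact (n - 1)"
  using chromatic[OF assms] independence[OF assms] coset_clique[OF assms] coset_card[OF assms]
    cosets_union[OF assms] cosets_disjoint[OF assms] cosets_card[OF assms]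
  by blast

end
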